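(* Let $\mathcal{G} = (\mathcal{N}, \mathcal{I}, \mathcal{P}, n, p)$ be a PCFG and let $L \ge 1$. There exists a transformer model with hard attention modules, embedding dimension $(4|\mathcal{N}| + 1)L$, $2L-1$ layers, and $4|\mathcal{N}|$ attention heads in each layer, which simulates the Inside-Outside algorithm on every sentence of length at most $L$ generated by $\mathcal{G}$, in the sense that the final contextual embeddings contain (as coordinates) all inside probabilities $\alpha(A,i,j)$ and all outside probabilities $\beta(A,i,j)$ for every $A \in \mathcal{N}$ and every span $1 \le i \le j \le$ (sentence length).
   Context: A PCFG in Chomsky normal form is $\mathcal{G} = (\mathcal{N}, \mathcal{I}, \mathcal{P}, n, p)$: $\mathcal{N}$ is a finite set of non-terminals (with a start symbol $S$), partitioned into in-terminals $\mathcal{I}$ and pre-terminals $\mathcal{P}$; there is a vocabulary of $n$ words; $p$ assigns probabilities to rules $A \to BC$ ($A \in \mathcal{I}$, $B, C \in \mathcal{N}$) and $A \to w$ ($A \in \mathcal{P}$, $w$ a word), summing to $1$ over rules with the same left-hand side. For a sentence $w_1\cdots w_m$, the inside probability is $\alpha(A,i,j) = \Pr[A \Rightarrow^* w_i \cdots w_j]$ and the outside probability is $\beta(A,i,j) = \Pr[S \Rightarrow^* w_1\cdots w_{i-1}\, A\, w_{j+1}\cdots w_m]$; the Inside-Outside algorithm computes these by the recursions $\alpha(A,i,i)=\Pr[A\to w_i]$, $\alpha(A,i,j) = \sum_{B,C}\sum_{k=i}^{j-1} \Pr[A\to BC]\alpha(B,i,k)\alpha(C,k+1,j)$, $\beta(S,1,m)=1$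 (and $\beta(A,1,m)=0$ for $A\ne S$), $\beta(A,i,j)=\sum_{B,C}\sum_{k>j}\Pr[B\to AC]\beta(B,i,k)\alpha(C,j+1,k)+\sum_{B,C}\sum_{k<i}\Pr[B\to CA]\beta(B,k,j)\alpha(C,k,i-1)$. A transformer here maps input token/position embeddings $e_i^{(0)}\in\mathbb{R}^d$ through layers; in each layer, each head $h$ has matrices $K_h, Q_h, V_h$ and updates position $i$ additively (residually) by $\sum_j a^h_{i,j} V_h e^{(\ell)}_j$. Hard attention means the attention score is $a^h_{i,j} = \mathrm{ReLU}\big((K_h e_j^{(\ell)})^\top Q_h e_i^{(\ell)}\big)$ (softmax replaced by ReLU). *)

theory Defs
  imports Complex_Main
begin

text \<open>The words of the
  vocabulary are 0, ..., vocab - 1.  interm is the set of in-terminals; the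
  pre-terminals are the remaining non-terminals.  prule A B C = Pr[A -> B C],
  lrule A w = Pr[A -> w].\<close>

record 'nt pcfg =
  start :: 'nt
  interm :: "'nt set"
  vocab :: nat
  prule :: "'nt \<Rightarrow> 'nt \<Rightarrow> 'nt \<Rightarrow> real"
  lrule :: "'nt \<Rightarrow> nat \<Rightarrow> real"

definition is_pcfg :: "('nt::finite) pcfg \<Rightarrow> bool" where
  "is_pcfg G \<longleftrightarrow>
     (\<forall>A B C. prule G A B C \<ge> 0) \<and> (\<forall>A w. lrule G A w \<ge> 0) \<and>
     (\<forall>A B C. A \<notin> interm G \<longrightarrow> prule G A B C = 0) \<and>
     (\<forall>A w. A \<in> interm G \<or> w \<ge> vocab G \<longrightarrow> lrule G A w = 0) \<and>
     (\<forall>A \<in> interm G. (\<Sum>B\<in>UNIV. \<Sum>C\<in>UNIV. prule G A B C) = 1) \<and>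
     (\<forall>A. A \<notin> interm G \<longrightarrow> (\<Sum>w<vocab G. lrule G A w) = 1)"

section \<open>Inside and outside probabilities (positions are 1-indexed; word i is w ! (i-1))\<close>

text \<open>ins_len G w d A i = alpha(A, i, i+d).\<close>
fun ins_len :: "('nt::finite) pcfg \<Rightarrow> nat list \<Rightarrow> nat \<Rightarrow> 'nt \<Rightarrow> nat \<Rightarrow> real" where
  "ins_len G w 0 A i = (if 1 \<le> i \<and> i \<le> length w then lrule G A (w ! (i - 1)) else 0)"
| "ins_len G w (Suc d) A i =
     (\<Sum>B\<in>UNIV. \<Sum>C\<in>UNIV. \<Sum>k\<in>{0..d}.
        prule G A B C * ins_len G w k B i * ins_len G w (d - k) C (i + k + 1))"

definition inside :: "('nt::finite) pcfg \<Rightarrow> nat list \<Rightarrow> 'nt \<Rightarrow> nat \<Rightarrow> nat \<Rightarrow> real" where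
  "inside G w A i j = (if 1 \<le> i \<and> i \<le> j \<and> j \<le> length w then ins_len G w (j - i) A i else 0)"

function outside :: "('nt::finite) pcfg \<Rightarrow> nat list \<Rightarrow> 'nt \<Rightarrow> nat \<Rightarrow> nat \<Rightarrow> real" where
  "outside G w A i j =
     (if \<not> (1 \<le> i \<and> i \<le> j \<and> j \<le> length w) then 0
      else if i = 1 \<and> j = length w then (if A = start G then 1 else 0)
      else (\<Sum>B\<in>UNIV. \<Sum>C\<in>UNIV.
              (\<Sum>k\<in>{j+1..length w}. prule G B A C * outside G w B i k * inside G w C (j + 1) k)
            + (\<Sum>k\<in>{1..<i}. prule G B C A * outside G w B k j * inside G w C k (i - 1))))"
  by pat_completeness auto
termination
  by (relation "measure (\<lambda>(G, w, A, i, j). length w + i - j)") auto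

definition generated :: "('nt::finite) pcfg \<Rightarrow> nat list \<Rightarrow> bool" where
  "generated G w \<longleftrightarrow> w \<noteq> [] \<and> set w \<subseteq> {..<vocab G} \<and> inside G w (start G) 1 (length w) > 0"

text \<open>Vectors in R^d are functions nat => real of which the coordinates < d are used;
  d x d matrices are functions nat => nat => real.\<close>
type_synonym vec = "nat \<Rightarrow> real"
type_synonym mat = "nat \<Rightarrow> nat \<Rightarrow> real"

record head =
  Kmat :: mat
  Qmat :: mat
  Vmat :: mat

record transformer =
  tdim :: nat
  temb :: "nat \<Rightarrow> nat \<Rightarrow> vec"   \<comment> \<open>temb word position = input embedding e_i^(0)\<close>
  tlayers :: "head list list"

definition mvec :: "nat \<Rightarrow> mat \<Rightarrow> vec \<Rightarrow> vec" where
  "mvec d M x = (\<lambda>r. \<Sum>c<d. M r c * x c)"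

definition dotp :: "nat \<Rightarrow> vec \<Rightarrow> vec \<Rightarrow> real" where
  "dotp d x y = (\<Sum>c<d. x c * y c)"

definition relu :: "real \<Rightarrow> real" where
  "relu x = max 0 x"

definition layer_step :: "nat \<Rightarrow> nat \<Rightarrow> head list \<Rightarrow> (nat \<Rightarrow> vec) \<Rightarrow> (nat \<Rightarrow> vec)" where
  "layer_step d m hs e = (\<lambda>i r. e i r +
     (\<Sum>h\<leftarrow>hs. \<Sum>j\<in>{1..m}.
        relu (dotp d (mvec d (Kmat h) (e j)) (mvec d (Qmat h) (e i))) * mvec d (Vmat h) (e j) r))"

definition final_emb :: "transformer \<Rightarrow> nat list \<Rightarrow> nat \<Rightarrow> vec" where
  "final_emb T w =
     foldl (\<lambda>e hs. layer_step (tdim T) (length w) hs e)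
           (\<lambda>i. temb T (w ! (i - 1)) i) (tlayers T)"

end

theory Submission
  imports Defs
begin

declare outside.simps[simp del]

definition baseA :: "('nt::finite) pcfg \<Rightarrow> nat list \<Rightarrow> 'nt \<Rightarrow> nat \<Rightarrow> nat \<Rightarrow> real" where
  "baseA G w A i e = (if e = i then lrule G A (w ! (i - 1)) else 0)"

definition phiA :: "('nt::finite) pcfg \<Rightarrow> nat list \<Rightarrow> ('nt \<Rightarrow> nat \<Rightarrow> nat \<Rightarrow> real) \<Rightarrow> 'nt \<Rightarrow> nat \<Rightarrow> nat \<Rightarrow> real" where
  "phiA G w a A i e = baseA G w A i e +
     (\<Sum>B\<in>UNIV. \<Sum>p\<in>{1..length w}. (if 2 \<le> p then a B i (p - 1) else 0) *
         (\<Sum>C\<in>UNIV. prule G A B C * a C p e))"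

definition phiB :: "('nt::finite) pcfg \<Rightarrow> nat \<Rightarrow> nat list \<Rightarrow> ('nt \<Rightarrow> nat \<Rightarrow> nat \<Rightarrow> real) \<Rightarrow> ('nt \<Rightarrow> nat \<Rightarrow> nat \<Rightarrow> real) \<Rightarrow> 'nt \<Rightarrow> nat \<Rightarrow> nat \<Rightarrow> real" where
  "phiB G L w a b A i e = (if i = 1 \<and> e = length w \<and> A = start G then 1 else 0) +
     (\<Sum>p\<in>{1..length w}. (\<Sum>B\<in>UNIV. \<Sum>k\<in>{1..L}. b B i k * (\<Sum>C\<in>UNIV. prule G B A C * a C p k))
         * (if p = e + 1 then 1 else 0)) +
     (\<Sum>C\<in>UNIV. \<Sum>p\<in>{1..length w}. (if 2 \<le> i then a C p (i - 1) else 0) *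
         (\<Sum>B\<in>UNIV. prule G B C A * b B p e))"

fun iter :: "('nt::finite) pcfg \<Rightarrow> nat \<Rightarrow> nat list \<Rightarrow> nat \<Rightarrow> ('nt \<Rightarrow> nat \<Rightarrow> nat \<Rightarrow> real) \<times> ('nt \<Rightarrow> nat \<Rightarrow> nat \<Rightarrow> real)" where
  "iter G L w 0 = (baseA G w, \<lambda>_ _ _. 0)"
| "iter G L w (Suc t) = (phiA G w (fst (iter G L w t)), phiB G L w (fst (iter G L w t)) (snd (iter G L w t)))"

lemma pcfg_nonneg:
  assumes "is_pcfg G" shows "prule G A B C \<ge> 0" "lrule G A x \<ge> 0"
  using assms unfolding is_pcfg_def by auto

lemma iter_nonneg:
  assumes "is_pcfg G"
  shows "0 \<le> fst (iter G L w t) A i e \<and> 0 \<le> snd (iter G L w t) A i e"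
proof (induction t arbitrary: A i e)
  case 0
  then show ?case using pcfg_nonneg[OF assms] by (simp add: baseA_def)
next
  case (Suc t)
  have ba: "0 \<le> baseA G w A i e" for A i e using pcfg_nonneg[OF assms] by (simp add: baseA_def)
  show ?case
    unfolding iter.simps fst_conv snd_conv phiA_def phiB_def
    using Suc ba pcfg_nonneg[OF assms]
    by (intro conjI add_nonneg_nonneg sum_nonneg mult_nonneg_nonneg) auto
qed

lemma inside_zero: "\<not> (1 \<le> i \<and> i \<le> j \<and> j \<le> length w) \<Longrightarrow> inside G w A i j = 0"
  unfolding inside_def by (rule if_not_P)

lemma iter_zero:
  assumes "i \<le> length w" "e < i \<or> length w < e"
  shows "fst (iter G L w t) A i e = 0"
  using assms
proof (induction t arbitrary: A i e)
  case 0
  then show ?case by (auto simp: baseA_def)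
next
  case (Suc t)
  have "(if 2 \<le> p then fst (iter G L w t) B i (p - 1) else 0) *
         (\<Sum>C\<in>UNIV. prule G A B C * fst (iter G L w t) C p e) = 0" if "p \<in> {1..length w}" for B p
  proof (cases "p - 1 < i \<or> p < 2")
    case True
    then show ?thesis using Suc.IH[of i "p - 1"] Suc.prems by auto
  next
    case False
    then have "e < p \<or> length w < e" using Suc.prems by auto
    then have "fst (iter G L w t) C p e = 0" for C using Suc.IH[of p e] that by auto
    then show ?thesis by simp
  qed
  then have "(\<Sum>B\<in>UNIV. \<Sum>p\<in>{1..length w}. (if 2 \<le> p then fst (iter G L w t) B i (p - 1) else 0) *
         (\<Sum>C\<in>UNIV. prule G A B C * fst (iter G L w t) C p e)) = 0"
    by (intro sum.neutral ballI) auto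
  then show ?case using Suc.prems unfolding iter.simps fst_conv phiA_def baseA_def
    by auto
qed

lemma inside_rec:
  assumes "1 \<le> i" "i \<le> e" "e \<le> length w"
  shows "inside G w A i e = baseA G w A i e +
     (\<Sum>B\<in>UNIV. \<Sum>p\<in>{1..length w}. (if 2 \<le> p then inside G w B i (p - 1) else 0) *
         (\<Sum>C\<in>UNIV. prule G A B C * inside G w C p e))"
proof -
  have rhs: "(\<Sum>B\<in>UNIV. \<Sum>p\<in>{1..length w}. (if 2 \<le> p then inside G w B i (p - 1) else 0) *
         (\<Sum>C\<in>UNIV. prule G A B C * inside G w C p e)) =
      (\<Sum>B\<in>UNIV. \<Sum>C\<in>UNIV. \<Sum>p\<in>{i+1..e}. prule G A B C * inside G w B i (p - 1) * inside G w C p e)"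
  proof (rule sum.cong[OF refl])
    fix B
    have "(\<Sum>p\<in>{1..length w}. (if 2 \<le> p then inside G w B i (p - 1) else 0) *
         (\<Sum>C\<in>UNIV. prule G A B C * inside G w C p e)) =
        (\<Sum>p\<in>{1..length w}. \<Sum>C\<in>UNIV. (if 2 \<le> p then inside G w B i (p - 1) else 0) *
         (prule G A B C * inside G w C p e))"
      by (simp add: sum_distrib_left)
    also have "\<dots> = (\<Sum>p\<in>{i+1..e}. \<Sum>C\<in>UNIV. (if 2 \<le> p then inside G w B i (p - 1) else 0) *
         (prule G A B C * inside G w C p e))"
    proof (rule sum.mono_neutral_right)
      show "{i + 1..e} \<subseteq> {1..length w}" using assms by auto
      show "\<forall>p\<in>{1..length w} - {i + 1..e}. (\<Sum>C\<in>UNIV. (if 2 \<le> p then inside G w B i (p - 1) else 0) *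
         (prule G A B C * inside G w C p e)) = 0"
      proof
        fix p assume "p \<in> {1..length w} - {i + 1..e}"
        then have "p - 1 < i \<or> e < p" by auto
        then show "(\<Sum>C\<in>UNIV. (if 2 \<le> p then inside G w B i (p - 1) else 0) *
         (prule G A B C * inside G w C p e)) = 0"
          by (auto simp: inside_zero)
      qed
    qed simp
    also have "\<dots> = (\<Sum>C\<in>UNIV. \<Sum>p\<in>{i+1..e}. prule G A B C * inside G w B i (p - 1) * inside G w C p e)"
      using assms by (subst sum.swap) (intro sum.cong refl, auto)
    finally show "(\<Sum>p\<in>{1..length w}. (if 2 \<le> p then inside G w B i (p - 1) else 0) *
         (\<Sum>C\<in>UNIV. prule G A B C * inside G w C p e)) =
      (\<Sum>C\<in>UNIV. \<Sum>p\<in>{i+1..e}. prule G A B C * inside G w B i (p - 1) * inside G w C p e)" .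
  qed
  show ?thesis
  proof (cases "e = i")
    case True
    have "(\<Sum>B\<in>UNIV. \<Sum>C\<in>UNIV. \<Sum>p\<in>{i+1..e}. prule G A B C * inside G w B i (p - 1) * inside G w C p e) = 0"
      using True by simp
    then show ?thesis using True assms rhs by (simp add: inside_def baseA_def)
  next
    case False
    then obtain d where d: "e - i = Suc d" using assms by (cases "e - i") auto
    have "inside G w A i e = ins_len G w (Suc d) A i" using assms d by (simp add: inside_def)
    also have "\<dots> = (\<Sum>B\<in>UNIV. \<Sum>C\<in>UNIV. \<Sum>k=0..d. prule G A B C * inside G w B i (i + k) * inside G w C (i + k + 1) e)"
      unfolding ins_len.simps
    proof (intro sum.cong refl)
      fix B C k assume k: "k \<in> {0..d}"
      have "inside G w B i (i + k) = ins_len G w k B i" using assms d k by (auto simp add: inside_def)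
      moreover have "e - (i + k + 1) = d - k" "i + k + 1 \<le> e" using d k by auto
      moreover have "inside G w C (i + k + 1) e = ins_len G w (d - k) C (i + k + 1)" using assms calculation(2,3) by (simp add: inside_def)
      ultimately show "prule G A B C * ins_len G w k B i * ins_len G w (d - k) C (i + k + 1) =
          prule G A B C * inside G w B i (i + k) * inside G w C (i + k + 1) e" by simp
    qed
    also have "\<dots> = (\<Sum>B\<in>UNIV. \<Sum>C\<in>UNIV. \<Sum>p\<in>{i+1..e}. prule G A B C * inside G w B i (p - 1) * inside G w C p e)"
    proof -
      have eq: "{i+1..e} = {0 + (i+1)..d + (i+1)}" using d by auto
      have "(\<Sum>k = 0..d. prule G A B C * inside G w B i (i + k) * inside G w C (i + k + 1) e) =
          (\<Sum>p = i + 1..e. prule G A B C * inside G w B i (p - 1) * inside G w C p e)" for B C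
        unfolding eq sum.shift_bounds_cl_nat_ivl by (simp add: add.commute add.left_commute)
      then show ?thesis by simp
    qed
    finally show ?thesis using rhs False by (simp add: baseA_def)
  qed
qed

lemma iter_inside:
  assumes "1 \<le> i" "i \<le> length w" "e - i \<le> t"
  shows "fst (iter G L w t) A i e = inside G w A i e"
  using assms
proof (induction t arbitrary: A i e)
  case 0
  then show ?case by (auto simp: baseA_def inside_def)
next
  case (Suc t)
  show ?case
  proof (cases "i \<le> e \<and> e \<le> length w")
    case False
    then show ?thesis using iter_zero[of i w e G L "Suc t" A] Suc.prems by (auto simp: inside_zero)
  next
    case True
    let ?a = "fst (iter G L w t)"
    have trm: "(if 2 \<le> p then ?a B i (p - 1) else 0) * (\<Sum>C\<in>UNIV. prule G A B C * ?a C p e) =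
       (if 2 \<le> p then inside G w B i (p - 1) else 0) * (\<Sum>C\<in>UNIV. prule G A B C * inside G w C p e)"
      if p: "p \<in> {1..length w}" for B p
    proof -
      consider "p \<le> i" | "i < p" "p \<le> e" | "e < p" by linarith
      then show ?thesis
      proof cases
        case 1
        then have "?a B i (p - 1) = inside G w B i (p - 1)" "inside G w B i (p - 1) = 0"
          using Suc.IH[of i "p - 1" B] Suc.prems by (auto simp: inside_zero)
        then show ?thesis by simp
      next
        case 2
        then have "?a B i (p - 1) = inside G w B i (p - 1)" "?a C p e = inside G w C p e" for C
          using Suc.IH[of i "p - 1" B] Suc.IH[of p e C] Suc.prems p by auto
        then show ?thesis by simp
      next
        case 3
        then have "?a C p e = inside G w C p e" "inside G w C p e = 0" for C
          using Suc.IH[of p e C] Suc.prems p by (auto simp: inside_zero)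
        then show ?thesis by simp
      qed
    qed
    have "fst (iter G L w (Suc t)) A i e = phiA G w ?a A i e" by simp
    also have "\<dots> = inside G w A i e"
      unfolding phiA_def using True Suc.prems trm
      by (subst inside_rec) (auto intro!: sum.cong)
    finally show ?thesis .
  qed
qed

lemma outside_rec:
  assumes "1 \<le> i" "i \<le> j" "j \<le> length w" "length w \<le> L"
  shows "outside G w A i j = phiB G L w (\<lambda>C p k. inside G w C p k) (\<lambda>B p k. outside G w B p k) A i j"
proof -
  let ?m = "length w"
  define T1 where "T1 = (\<Sum>p\<in>{1..?m}. (\<Sum>B\<in>UNIV. \<Sum>k\<in>{1..L}. outside G w B i k * (\<Sum>C\<in>UNIV. prule G B A C * inside G w C p k))
         * (if p = j + 1 then 1 else 0))"
  define T2 where "T2 = (\<Sum>C\<in>UNIV. \<Sum>p\<in>{1..?m}. (if 2 \<le> i then inside G w C p (i - 1) else 0) *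
         (\<Sum>B\<in>UNIV. prule G B C A * outside G w B p j))"
  have phi: "phiB G L w (\<lambda>C p k. inside G w C p k) (\<lambda>B p k. outside G w B p k) A i j =
     (if i = 1 \<and> j = ?m \<and> A = start G then 1 else 0) + T1 + T2"
    unfolding phiB_def T1_def T2_def by simp
  have T1: "T1 = (\<Sum>B\<in>UNIV. \<Sum>C\<in>UNIV. \<Sum>k = j + 1..?m. prule G B A C * outside G w B i k * inside G w C (j + 1) k)"
  proof (cases "j + 1 \<le> ?m")
    case False
    then show ?thesis unfolding T1_def by (auto intro!: sum.neutral)
  next
    case True
    have "T1 = (\<Sum>B\<in>UNIV. \<Sum>k\<in>{1..L}. outside G w B i k * (\<Sum>C\<in>UNIV. prule G B A C * inside G w C (j+1) k))"
      unfolding T1_def using True by (simp add: mult.commute[of _ "if _ then _ else _"] if_distrib[of "\<lambda>x. x * _"] cong: if_cong)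
    also have "\<dots> = (\<Sum>B\<in>UNIV. \<Sum>C\<in>UNIV. \<Sum>k\<in>{1..L}. prule G B A C * outside G w B i k * inside G w C (j+1) k)"
      by (intro sum.cong refl, simp add: sum_distrib_left mult_ac, rule sum.swap)
    also have "\<dots> = (\<Sum>B\<in>UNIV. \<Sum>C\<in>UNIV. \<Sum>k = j + 1..?m. prule G B A C * outside G w B i k * inside G w C (j + 1) k)"
    proof -
      have "(\<Sum>k\<in>{1..L}. prule G B A C * outside G w B i k * inside G w C (j+1) k) =
        (\<Sum>k = j + 1..?m. prule G B A C * outside G w B i k * inside G w C (j + 1) k)" for B C
        by (rule sum.mono_neutral_right) (use assms in \<open>auto simp: inside_zero\<close>)
      then show ?thesis by simp
    qed
    finally show ?thesis .
  qed
  have T2: "T2 = (\<Sum>B\<in>UNIV. \<Sum>C\<in>UNIV. \<Sum>k = 1..<i. prule G B C A * outside G w B k j * inside G w C k (i - 1))"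
  proof (cases "2 \<le> i")
    case False
    then show ?thesis unfolding T2_def by simp
  next
    case True
    have "T2 = (\<Sum>C\<in>UNIV. \<Sum>p\<in>{1..?m}. \<Sum>B\<in>UNIV. prule G B C A * outside G w B p j * inside G w C p (i - 1))"
      unfolding T2_def using True by (simp add: sum_distrib_left mult_ac)
    also have "\<dots> = (\<Sum>C\<in>UNIV. \<Sum>p\<in>{1..<i}. \<Sum>B\<in>UNIV. prule G B C A * outside G w B p j * inside G w C p (i - 1))"
    proof -
      have "(\<Sum>p\<in>{1..?m}. \<Sum>B\<in>UNIV. prule G B C A * outside G w B p j * inside G w C p (i - 1)) =
         (\<Sum>p\<in>{1..<i}. \<Sum>B\<in>UNIV. prule G B C A * outside G w B p j * inside G w C p (i - 1))" for C
        by (rule sum.mono_neutral_right) (use assms in \<open>auto simp: inside_zero\<close>)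
      then show ?thesis by simp
    qed
    also have "\<dots> = (\<Sum>B\<in>UNIV. \<Sum>C\<in>UNIV. \<Sum>k = 1..<i. prule G B C A * outside G w B k j * inside G w C k (i - 1))"
      by (subst sum.swap[of _ _ "{1..<i}"]) (rule sum.swap)
    finally show ?thesis .
  qed
  show ?thesis
  proof (cases "i = 1 \<and> j = ?m")
    case True
    have "T1 = 0" unfolding T1 using True by simp
    moreover have "T2 = 0" unfolding T2 using True by simp
    ultimately show ?thesis using True phi assms by (subst outside.simps) simp
  next
    case False
    then show ?thesis using phi assms unfolding T1 T2 by (subst outside.simps) (auto simp add: sum.distrib)
  qed
qed

lemma iter_outside:
  assumes "1 \<le> i" "i \<le> j" "j \<le> length w" "length w \<le> L" "1 \<le> L"
    and "L + length w \<le> t + (j - i + 1)"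
  shows "snd (iter G L w t) A i j = outside G w A i j"
  using assms
proof (induction t arbitrary: A i j)
  case 0
  then show ?case by simp
next
  case (Suc t)
  let ?a = "fst (iter G L w t)" and ?b = "snd (iter G L w t)" and ?m = "length w"
  have tL: "L - 1 \<le> t" using Suc.prems by simp
  have aI: "?a C p k = inside G w C p k" if "1 \<le> p" "p \<le> ?m" "k \<le> L" for C p k
    using iter_inside[of p w k t G L C] that tL by simp
  have t1: "(\<Sum>B\<in>UNIV. \<Sum>k\<in>{1..L}. ?b B i k * (\<Sum>C\<in>UNIV. prule G B A C * ?a C p k)) * (if p = j + 1 then 1 else 0) =
     (\<Sum>B\<in>UNIV. \<Sum>k\<in>{1..L}. outside G w B i k * (\<Sum>C\<in>UNIV. prule G B A C * inside G w C p k)) * (if p = j + 1 then 1 else 0)"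
    if p: "p \<in> {1..?m}" for p
  proof (cases "p = j + 1")
    case True
    have "?b B i k * (\<Sum>C\<in>UNIV. prule G B A C * ?a C p k) = outside G w B i k * (\<Sum>C\<in>UNIV. prule G B A C * inside G w C p k)"
      if k: "k \<in> {1..L}" for B k
    proof (cases "j + 1 \<le> k \<and> k \<le> ?m")
      case True
      moreover have "L + ?m \<le> t + (k - i + 1)" using True Suc.prems by linarith
      ultimately have "?b B i k = outside G w B i k" using Suc.IH[of i k B] Suc.prems k by simp
      then show ?thesis using aI p k by simp
    next
      case False
      then have "inside G w C p k = 0" for C using \<open>p = j + 1\<close> by (auto simp: inside_zero)
      then show ?thesis using aI p k by simp
    qed
    then show ?thesis by simp
  qed simp
  have t2: "(if 2 \<le> i then ?a C p (i - 1) else 0) * (\<Sum>B\<in>UNIV. prule G B C A * ?b B p j) =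
      (if 2 \<le> i then inside G w C p (i - 1) else 0) * (\<Sum>B\<in>UNIV. prule G B C A * outside G w B p j)"
    if p: "p \<in> {1..?m}" for C p
  proof (cases "2 \<le> i \<and> p < i")
    case True
    moreover have "L + ?m \<le> t + (j - p + 1)" using True Suc.prems by linarith
    ultimately have "?b B p j = outside G w B p j" for B using Suc.IH[of p j B] Suc.prems p by simp
    moreover have "?a C p (i - 1) = inside G w C p (i - 1)" using aI p Suc.prems by simp
    ultimately show ?thesis by simp
  next
    case False
    moreover have "?a C p (i - 1) = inside G w C p (i - 1)" using aI p Suc.prems by simp
    ultimately show ?thesis by (auto simp: inside_zero)
  qed
  have "snd (iter G L w (Suc t)) A i j = phiB G L w ?a ?b A i j" by simp
  also have "\<dots> = phiB G L w (\<lambda>C p k. inside G w C p k) (\<lambda>B p k. outside G w B p k) A i j"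
  proof -
    have s1: "(\<Sum>p\<in>{1..?m}. (\<Sum>B\<in>UNIV. \<Sum>k\<in>{1..L}. ?b B i k * (\<Sum>C\<in>UNIV. prule G B A C * ?a C p k)) * (if p = j + 1 then 1 else 0)) =
     (\<Sum>p\<in>{1..?m}. (\<Sum>B\<in>UNIV. \<Sum>k\<in>{1..L}. outside G w B i k * (\<Sum>C\<in>UNIV. prule G B A C * inside G w C p k)) * (if p = j + 1 then 1 else 0))"
      by (rule sum.cong[OF refl], rule t1)
    have s2: "(\<Sum>C\<in>UNIV. \<Sum>p\<in>{1..?m}. (if 2 \<le> i then ?a C p (i - 1) else 0) * (\<Sum>B\<in>UNIV. prule G B C A * ?b B p j)) =
      (\<Sum>C\<in>UNIV. \<Sum>p\<in>{1..?m}. (if 2 \<le> i then inside G w C p (i - 1) else 0) * (\<Sum>B\<in>UNIV. prule G B C A * outside G w B p j))"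
      by (rule sum.cong[OF refl], rule sum.cong[OF refl], rule t2)
    show ?thesis unfolding phiB_def s1 s2 ..
  qed
  also have "\<dots> = outside G w A i j" using outside_rec[of i j w L G A] Suc.prems by simp
  finally show ?case .
qed


definition lift :: "('l \<Rightarrow> nat) \<Rightarrow> 'l set \<Rightarrow> ('l \<Rightarrow> real) \<Rightarrow> vec" where
  "lift \<iota> \<Lambda> f c = (if c \<in> \<iota> ` \<Lambda> then f (inv_into \<Lambda> \<iota> c) else 0)"

definition liftM :: "('l \<Rightarrow> nat) \<Rightarrow> 'l set \<Rightarrow> ('l \<Rightarrow> 'l \<Rightarrow> real) \<Rightarrow> mat" where
  "liftM \<iota> \<Lambda> M r c = (if r \<in> \<iota> ` \<Lambda> \<and> c \<in> \<iota> ` \<Lambda> then M (inv_into \<Lambda> \<iota> r) (inv_into \<Lambda> \<iota> c) else 0)"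

definition lmv :: "'l set \<Rightarrow> ('l \<Rightarrow> 'l \<Rightarrow> real) \<Rightarrow> ('l \<Rightarrow> real) \<Rightarrow> 'l \<Rightarrow> real" where
  "lmv \<Lambda> M x l = (\<Sum>l'\<in>\<Lambda>. M l l' * x l')"

lemma lift_at: "inj_on \<iota> \<Lambda> \<Longrightarrow> l \<in> \<Lambda> \<Longrightarrow> lift \<iota> \<Lambda> f (\<iota> l) = f l"
  by (simp add: lift_def)

lemma lift_out: "c \<notin> \<iota> ` \<Lambda> \<Longrightarrow> lift \<iota> \<Lambda> f c = 0"
  by (simp add: lift_def)

lemma sum_lessThan_lift:
  assumes inj: "inj_on \<iota> \<Lambda>" and sub: "\<iota> ` \<Lambda> \<subseteq> {..<(d::nat)}" and fin: "finite \<Lambda>"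
    and z: "\<And>c. c \<notin> \<iota> ` \<Lambda> \<Longrightarrow> g c = 0"
  shows "(\<Sum>c<d. g c) = (\<Sum>l\<in>\<Lambda>. g (\<iota> l))"
proof -
  have "(\<Sum>c<d. g c) = (\<Sum>c\<in>\<iota> ` \<Lambda>. g c)"
    by (rule sum.mono_neutral_right) (use sub z in \<open>auto simp: finite_lessThan\<close>)
  also have "\<dots> = (\<Sum>l\<in>\<Lambda>. g (\<iota> l))" by (rule sum.reindex[OF inj, unfolded comp_def])
  finally show ?thesis .
qed

lemma mvec_lift:
  assumes inj: "inj_on \<iota> \<Lambda>" and sub: "\<iota> ` \<Lambda> \<subseteq> {..<d}" and fin: "finite \<Lambda>"
  shows "mvec d (liftM \<iota> \<Lambda> M) (lift \<iota> \<Lambda> x) = lift \<iota> \<Lambda> (lmv \<Lambda> M x)"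
proof
  fix r
  show "mvec d (liftM \<iota> \<Lambda> M) (lift \<iota> \<Lambda> x) r = lift \<iota> \<Lambda> (lmv \<Lambda> M x) r"
  proof (cases "r \<in> \<iota> ` \<Lambda>")
    case False
    then show ?thesis by (simp add: mvec_def liftM_def lift_def)
  next
    case True
    then obtain l0 where l0: "l0 \<in> \<Lambda>" "r = \<iota> l0" by auto
    have "mvec d (liftM \<iota> \<Lambda> M) (lift \<iota> \<Lambda> x) r = (\<Sum>l\<in>\<Lambda>. liftM \<iota> \<Lambda> M r (\<iota> l) * lift \<iota> \<Lambda> x (\<iota> l))"
      unfolding mvec_def by (rule sum_lessThan_lift[OF inj sub fin]) (simp add: lift_def)
    also have "\<dots> = (\<Sum>l\<in>\<Lambda>. M l0 l * x l)"
      using inj l0 by (intro sum.cong refl) (simp add: liftM_def lift_def)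
    finally show ?thesis using l0 inj by (simp add: lift_def lmv_def)
  qed
qed

lemma dotp_lift:
  assumes inj: "inj_on \<iota> \<Lambda>" and sub: "\<iota> ` \<Lambda> \<subseteq> {..<d}" and fin: "finite \<Lambda>"
  shows "dotp d (lift \<iota> \<Lambda> x) (lift \<iota> \<Lambda> y) = (\<Sum>l\<in>\<Lambda>. x l * y l)"
proof -
  have "dotp d (lift \<iota> \<Lambda> x) (lift \<iota> \<Lambda> y) = (\<Sum>l\<in>\<Lambda>. lift \<iota> \<Lambda> x (\<iota> l) * lift \<iota> \<Lambda> y (\<iota> l))"
    unfolding dotp_def by (rule sum_lessThan_lift[OF inj sub fin]) (simp add: lift_def)
  also have "\<dots> = (\<Sum>l\<in>\<Lambda>. x l * y l)" using inj by (intro sum.cong refl) (simp add: lift_def)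
  finally show ?thesis .
qed

definition mkhead :: "('l \<Rightarrow> nat) \<Rightarrow> 'l set \<Rightarrow> ('l \<Rightarrow> 'l \<Rightarrow> real) \<times> ('l \<Rightarrow> 'l \<Rightarrow> real) \<times> ('l \<Rightarrow> 'l \<Rightarrow> real) \<Rightarrow> head" where
  "mkhead \<iota> \<Lambda> h = \<lparr>Kmat = liftM \<iota> \<Lambda> (fst h), Qmat = liftM \<iota> \<Lambda> (fst (snd h)), Vmat = liftM \<iota> \<Lambda> (snd (snd h))\<rparr>"

definition LS :: "'l set \<Rightarrow> nat \<Rightarrow> (('l \<Rightarrow> 'l \<Rightarrow> real) \<times> ('l \<Rightarrow> 'l \<Rightarrow> real) \<times> ('l \<Rightarrow> 'l \<Rightarrow> real)) list \<Rightarrow> (nat \<Rightarrow> 'l \<Rightarrow> real) \<Rightarrow> nat \<Rightarrow> 'l \<Rightarrow> real" where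
  "LS \<Lambda> m hs x i l = x i l + (\<Sum>h\<leftarrow>hs. \<Sum>j\<in>{1..m}.
      relu (\<Sum>l'\<in>\<Lambda>. lmv \<Lambda> (fst h) (x j) l' * lmv \<Lambda> (fst (snd h)) (x i) l') * lmv \<Lambda> (snd (snd h)) (x j) l)"

lemma layer_step_lift:
  assumes inj: "inj_on \<iota> \<Lambda>" and sub: "\<iota> ` \<Lambda> \<subseteq> {..<d}" and fin: "finite \<Lambda>"
  shows "layer_step d m (map (mkhead \<iota> \<Lambda>) hs) (\<lambda>i. lift \<iota> \<Lambda> (x i)) i = lift \<iota> \<Lambda> (LS \<Lambda> m hs x i)"
proof
  fix r
  note ml = mvec_lift[OF inj sub fin] and dl = dotp_lift[OF inj sub fin]
  show "layer_step d m (map (mkhead \<iota> \<Lambda>) hs) (\<lambda>i. lift \<iota> \<Lambda> (x i)) i r = lift \<iota> \<Lambda> (LS \<Lambda> m hs x i) r"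
  proof (cases "r \<in> \<iota> ` \<Lambda>")
    case False
    then show ?thesis by (simp add: layer_step_def mkhead_def ml dl lift_out o_def)
  next
    case True
    then obtain l0 where l0: "l0 \<in> \<Lambda>" "r = \<iota> l0" by auto
    show ?thesis using l0 inj by (simp add: layer_step_def mkhead_def ml dl lift_at LS_def o_def)
  qed
qed


datatype 'nt lab = Pos nat | Al 'nt nat | Be 'nt nat | Ba 'nt nat

definition Lab :: "nat \<Rightarrow> ('nt::finite) lab set" where
  "Lab L = Pos ` {1..L} \<union> (\<lambda>(A, e). Al A e) ` (UNIV \<times> {1..L}) \<union> (\<lambda>(A, e). Be A e) ` (UNIV \<times> {1..L})
     \<union> (\<lambda>(A, e). Ba A e) ` (UNIV \<times> {1..L})"

lemma Lab_mem[simp]: "Pos p \<in> Lab L \<longleftrightarrow> 1 \<le> p \<and> p \<le> L" "Al A e \<in> Lab L \<longleftrightarrow> 1 \<le> e \<and> e \<le> L"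
  "Be A e \<in> Lab L \<longleftrightarrow> 1 \<le> e \<and> e \<le> L" "Ba A e \<in> Lab L \<longleftrightarrow> 1 \<le> e \<and> e \<le> L"
  unfolding Lab_def by auto

lemma finite_Lab: "finite (Lab L)" unfolding Lab_def by auto

lemma sum_Lab:
  "(\<Sum>l\<in>Lab L. f l) = (\<Sum>p=1..L. f (Pos p)) + (\<Sum>A\<in>(UNIV::('nt::finite) set). \<Sum>e=1..L. f (Al A e))
     + (\<Sum>A\<in>(UNIV::'nt set). \<Sum>e=1..L. f (Be A e)) + (\<Sum>A\<in>(UNIV::'nt set). \<Sum>e=1..L. f (Ba A e))"
proof -
  have i1: "inj_on Pos {1..L}" by (auto simp: inj_on_def)
  have i2: "inj_on (\<lambda>(A, e). Al A e) X" "inj_on (\<lambda>(A, e). Be A e) X" "inj_on (\<lambda>(A, e). Ba A e) X"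
    for X :: "('nt \<times> nat) set" by (auto simp: inj_on_def)
  have "(\<Sum>l\<in>Lab L. f l) = sum f (Pos ` {1..L}) + sum f ((\<lambda>(A, e). Al A e) ` (UNIV \<times> {1..L}))
     + sum f ((\<lambda>(A, e). Be A e) ` (UNIV \<times> {1..L})) + sum f ((\<lambda>(A, e). Ba A e) ` (UNIV \<times> {1..L}))"
    unfolding Lab_def by (subst sum.union_disjoint, auto)+
  also have "\<dots> = (\<Sum>p=1..L. f (Pos p)) + (\<Sum>A\<in>(UNIV::('nt::finite) set). \<Sum>e=1..L. f (Al A e))
     + (\<Sum>A\<in>(UNIV::'nt set). \<Sum>e=1..L. f (Be A e)) + (\<Sum>A\<in>(UNIV::'nt set). \<Sum>e=1..L. f (Ba A e))"
  proof -
    have a: "sum f ((\<lambda>(A, e). Al A e) ` (UNIV \<times> {1..L})) = (\<Sum>A\<in>(UNIV::'nt set). \<Sum>e=1..L. f (Al A e))"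
      by (subst sum.reindex[OF i2(1)]) (simp add: sum.cartesian_product split_def)
    have b: "sum f ((\<lambda>(A, e). Be A e) ` (UNIV \<times> {1..L})) = (\<Sum>A\<in>(UNIV::'nt set). \<Sum>e=1..L. f (Be A e))"
      by (subst sum.reindex[OF i2(2)]) (simp add: sum.cartesian_product split_def)
    have c: "sum f ((\<lambda>(A, e). Ba A e) ` (UNIV \<times> {1..L})) = (\<Sum>A\<in>(UNIV::'nt set). \<Sum>e=1..L. f (Ba A e))"
      by (subst sum.reindex[OF i2(3)]) (simp add: sum.cartesian_product split_def)
    show ?thesis unfolding a b c sum.reindex[OF i1] comp_def by (rule refl)
  qed
  finally show ?thesis .
qed


lemma if0_mult: "(if P then a else 0) * (x::real) = (if P then a * x else 0)" by simp
lemma mult_if0: "(x::real) * (if P then a else 0) = (if P then x * a else 0)" by simp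
lemma sum_if_const: "(\<Sum>k\<in>S. if P then f k else 0) = (if P then (\<Sum>k\<in>S. f k) else (0::real))" by simp
lemmas ssimps = if0_mult mult_if0 sum_if_const sum.delta sum.delta'

definition emb :: "('nt::finite) pcfg \<Rightarrow> nat list \<Rightarrow> ('nt \<Rightarrow> nat \<Rightarrow> nat \<Rightarrow> real) \<times> ('nt \<Rightarrow> nat \<Rightarrow> nat \<Rightarrow> real) \<Rightarrow> nat \<Rightarrow> 'nt lab \<Rightarrow> real" where
  "emb G w \<sigma> i l = (case l of Pos p \<Rightarrow> if p = i then 1 else 0 | Al A e \<Rightarrow> fst \<sigma> A i e
       | Be A e \<Rightarrow> snd \<sigma> A i e | Ba A e \<Rightarrow> baseA G w A i e)"

definition kin :: "'nt \<Rightarrow> 'nt lab \<Rightarrow> 'nt lab \<Rightarrow> real" where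
  "kin B l l' = (case l of Al B' s \<Rightarrow> (case l' of Pos p' \<Rightarrow> if B' = B then (if p' = s + 1 then 1 else 0) else 0 | _ \<Rightarrow> 0) | _ \<Rightarrow> 0)"
definition qin :: "'nt \<Rightarrow> 'nt lab \<Rightarrow> 'nt lab \<Rightarrow> real" where
  "qin B l l' = (case l of Al B' s \<Rightarrow> (case l' of Al B'' s' \<Rightarrow> if B' = B then (if B'' = B then (if s' = s then 1 else 0) else 0) else 0 | _ \<Rightarrow> 0) | _ \<Rightarrow> 0)"
definition vin :: "('nt::finite) pcfg \<Rightarrow> 'nt \<Rightarrow> 'nt lab \<Rightarrow> 'nt lab \<Rightarrow> real" where
  "vin G B l l' = (case l of Al A e \<Rightarrow> (case l' of Al C e' \<Rightarrow> if e' = e then prule G A B C else 0 | _ \<Rightarrow> 0) | _ \<Rightarrow> 0)"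

lemma lmv_kin: "lmv (Lab L) (kin B) (emb G w \<sigma> p) l =
   (case l of Al B' s \<Rightarrow> if B' = B \<and> s + 1 \<le> L \<and> p = s + 1 then 1 else 0 | _ \<Rightarrow> 0)"
  by (cases l) (auto simp: lmv_def sum_Lab kin_def emb_def ssimps)

lemma lmv_qin: "lmv (Lab L) (qin B) (emb G w \<sigma> i) l =
   (case l of Al B' s \<Rightarrow> if B' = B \<and> 1 \<le> s \<and> s \<le> L then fst \<sigma> B i s else 0 | _ \<Rightarrow> 0)"
  by (cases l) (auto simp: lmv_def sum_Lab qin_def emb_def ssimps)

lemma lmv_vin: "lmv (Lab L) (vin G B) (emb G w \<sigma> p) l =
   (case l of Al A e \<Rightarrow> if 1 \<le> e \<and> e \<le> L then (\<Sum>C\<in>UNIV. prule G A B C * fst \<sigma> C p e) else 0 | _ \<Rightarrow> 0)"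
  by (cases l) (auto simp: lmv_def sum_Lab vin_def emb_def ssimps)

definition kt1 :: "('nt::finite) pcfg \<Rightarrow> 'nt \<Rightarrow> 'nt lab \<Rightarrow> 'nt lab \<Rightarrow> real" where
  "kt1 G A l l' = (case l of Be B k0 \<Rightarrow> (case l' of Al C k0' \<Rightarrow> if k0' = k0 then prule G B A C else 0 | _ \<Rightarrow> 0) | _ \<Rightarrow> 0)"
definition qt1 :: "'nt lab \<Rightarrow> 'nt lab \<Rightarrow> real" where
  "qt1 l l' = (case l of Be B k0 \<Rightarrow> (case l' of Be B' k0' \<Rightarrow> if B' = B then (if k0' = k0 then 1 else 0) else 0 | _ \<Rightarrow> 0) | _ \<Rightarrow> 0)"
definition vt1 :: "'nt \<Rightarrow> 'nt lab \<Rightarrow> 'nt lab \<Rightarrow> real" where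
  "vt1 A l l' = (case l of Be A' e \<Rightarrow> (case l' of Pos p' \<Rightarrow> if A' = A then (if p' = e + 1 then 1 else 0) else 0 | _ \<Rightarrow> 0) | _ \<Rightarrow> 0)"

definition kt2 :: "'nt \<Rightarrow> 'nt lab \<Rightarrow> 'nt lab \<Rightarrow> real" where
  "kt2 C l l' = (case l of Al C' s \<Rightarrow> (case l' of Al C'' s' \<Rightarrow> if C' = C then (if C'' = C then (if s' = s then 1 else 0) else 0) else 0 | _ \<Rightarrow> 0) | _ \<Rightarrow> 0)"
definition qt2 :: "'nt \<Rightarrow> 'nt lab \<Rightarrow> 'nt lab \<Rightarrow> real" where
  "qt2 C l l' = (case l of Al C' s \<Rightarrow> (case l' of Pos p' \<Rightarrow> if C' = C then (if p' = s + 1 then 1 else 0) else 0 | _ \<Rightarrow> 0) | _ \<Rightarrow> 0)"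
definition vt2 :: "('nt::finite) pcfg \<Rightarrow> 'nt \<Rightarrow> 'nt lab \<Rightarrow> 'nt lab \<Rightarrow> real" where
  "vt2 G C l l' = (case l of Be A e \<Rightarrow> (case l' of Be B e' \<Rightarrow> if e' = e then prule G B C A else 0 | _ \<Rightarrow> 0) | _ \<Rightarrow> 0)"

definition kr :: "'nt lab \<Rightarrow> 'nt lab \<Rightarrow> real" where
  "kr l l' = (case l of Pos p \<Rightarrow> (case l' of Pos p' \<Rightarrow> if p' = p then 1 else 0 | _ \<Rightarrow> 0) | _ \<Rightarrow> 0)"
definition vr :: "'nt lab \<Rightarrow> 'nt lab \<Rightarrow> real" where
  "vr l l' = (case l of
      Al A e \<Rightarrow> (case l' of Ba A' e' \<Rightarrow> if A' = A then (if e' = e then 1 else 0) else 0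
                          | Al A' e' \<Rightarrow> if A' = A then (if e' = e then -1 else 0) else 0 | _ \<Rightarrow> 0)
    | Be A e \<Rightarrow> (case l' of Be A' e' \<Rightarrow> if A' = A then (if e' = e then -1 else 0) else 0 | _ \<Rightarrow> 0)
    | _ \<Rightarrow> 0)"

definition kb :: "'nt lab \<Rightarrow> 'nt lab \<Rightarrow> real" where
  "kb l l' = (case l of Pos p \<Rightarrow> if p = 1 then (case l' of Pos p' \<Rightarrow> 1 | _ \<Rightarrow> 0) else 0 | _ \<Rightarrow> 0)"
definition qb :: "'nt lab \<Rightarrow> 'nt lab \<Rightarrow> real" where
  "qb l l' = (case l of Pos p \<Rightarrow> if p = 1 then (case l' of Pos p' \<Rightarrow> if p' = 1 then 1 else 0 | _ \<Rightarrow> 0) else 0 | _ \<Rightarrow> 0)"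
definition vb :: "'nt \<Rightarrow> 'nt lab \<Rightarrow> 'nt lab \<Rightarrow> real" where
  "vb S l l' = (case l of Be A e \<Rightarrow> if A = S then (case l' of Pos p' \<Rightarrow> (if p' = e then 1 else 0) - (if p' = e + 1 then 1 else 0) | _ \<Rightarrow> 0) else 0 | _ \<Rightarrow> 0)"

lemma lmv_kt1: "lmv (Lab L) (kt1 G A) (emb G w \<sigma> p) l =
   (case l of Be B k \<Rightarrow> if 1 \<le> k \<and> k \<le> L then (\<Sum>C\<in>UNIV. prule G B A C * fst \<sigma> C p k) else 0 | _ \<Rightarrow> 0)"
  by (cases l) (auto simp: lmv_def sum_Lab kt1_def emb_def ssimps)
lemma lmv_qt1: "lmv (Lab L) qt1 (emb G w \<sigma> i) l =
   (case l of Be B k \<Rightarrow> if 1 \<le> k \<and> k \<le> L then snd \<sigma> B i k else 0 | _ \<Rightarrow> 0)"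
  by (cases l) (auto simp: lmv_def sum_Lab qt1_def emb_def ssimps)
lemma lmv_vt1: "lmv (Lab L) (vt1 A) (emb G w \<sigma> p) l =
   (case l of Be A' e \<Rightarrow> if A' = A \<and> e + 1 \<le> L \<and> p = e + 1 then 1 else 0 | _ \<Rightarrow> 0)"
  by (cases l) (auto simp: lmv_def sum_Lab vt1_def emb_def ssimps)
lemma lmv_kt2: "lmv (Lab L) (kt2 C) (emb G w \<sigma> p) l =
   (case l of Al C' s \<Rightarrow> if C' = C then (if 1 \<le> s \<and> s \<le> L then fst \<sigma> C p s else 0) else 0 | _ \<Rightarrow> 0)"
  by (cases l) (auto simp: lmv_def sum_Lab kt2_def emb_def ssimps)
lemma lmv_qt2: "lmv (Lab L) (qt2 C) (emb G w \<sigma> i) l =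
   (case l of Al C' s \<Rightarrow> if C' = C then (if s + 1 \<le> L \<and> i = s + 1 then 1 else 0) else 0 | _ \<Rightarrow> 0)"
  by (cases l) (auto simp: lmv_def sum_Lab qt2_def emb_def ssimps)
lemma lmv_vt2: "lmv (Lab L) (vt2 G C) (emb G w \<sigma> p) l =
   (case l of Be A e \<Rightarrow> if 1 \<le> e \<and> e \<le> L then (\<Sum>B\<in>UNIV. prule G B C A * snd \<sigma> B p e) else 0 | _ \<Rightarrow> 0)"
  by (cases l) (auto simp: lmv_def sum_Lab vt2_def emb_def ssimps)
lemma lmv_kr: "lmv (Lab L) kr (emb G w \<sigma> p) l =
   (case l of Pos p0 \<Rightarrow> if 1 \<le> p0 \<and> p0 \<le> L \<and> p0 = p then 1 else 0 | _ \<Rightarrow> 0)"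
  by (cases l) (auto simp: lmv_def sum_Lab kr_def emb_def ssimps)
lemma lmv_vr: "lmv (Lab L) vr (emb G w \<sigma> p) l =
   (case l of Al A e \<Rightarrow> if 1 \<le> e \<and> e \<le> L then baseA G w A p e - fst \<sigma> A p e else 0
     | Be A e \<Rightarrow> if 1 \<le> e \<and> e \<le> L then - snd \<sigma> A p e else 0 | _ \<Rightarrow> 0)"
  by (cases l) (auto simp: lmv_def sum_Lab vr_def emb_def ssimps)
lemma lmv_kb: "lmv (Lab L) kb (emb G w \<sigma> p) l =
   (case l of Pos p0 \<Rightarrow> if p0 = 1 \<and> 1 \<le> p \<and> p \<le> L then 1 else 0 | _ \<Rightarrow> 0)"
  by (cases l) (auto simp: lmv_def sum_Lab kb_def emb_def ssimps)
lemma lmv_qb: "lmv (Lab L) qb (emb G w \<sigma> i) l =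
   (case l of Pos p0 \<Rightarrow> if p0 = 1 \<and> 1 \<le> L \<and> i = 1 then 1 else 0 | _ \<Rightarrow> 0)"
  by (cases l) (auto simp: lmv_def sum_Lab qb_def emb_def ssimps)
lemma lmv_vb: "lmv (Lab L) (vb S) (emb G w \<sigma> p) l =
   (case l of Be A e \<Rightarrow> if A = S then (if 1 \<le> e \<and> e \<le> L \<and> p = e then 1 else 0) - (if e + 1 \<le> L \<and> p = e + 1 then 1 else 0) else 0 | _ \<Rightarrow> 0)"
  by (cases l) (auto simp: lmv_def sum_Lab vb_def emb_def ssimps left_diff_distrib sum_subtractf)
lemma lmv_zero: "lmv \<Lambda> (\<lambda>_ _. 0) x l = 0"
  by (simp add: lmv_def)

lemma score_in: "1 \<le> p \<Longrightarrow> p \<le> L \<Longrightarrow>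
  (\<Sum>l\<in>Lab L. lmv (Lab L) (kin B) (emb G w \<sigma> p) l * lmv (Lab L) (qin B) (emb G w \<sigma> i) l)
   = (if 2 \<le> p then fst \<sigma> B i (p - 1) else 0)"
proof -
  assume p: "1 \<le> p" "p \<le> L"
  have "(\<Sum>e=1..L. if Suc e \<le> L \<and> p = Suc e then 1 * fst \<sigma> B i e else 0) =
        (\<Sum>e=1..L. if e = p - 1 then (if 2 \<le> p then fst \<sigma> B i e else 0) else 0)"
    using p by (intro sum.cong) auto
  then show ?thesis using p by (auto simp: sum_Lab lmv_kin lmv_qin ssimps)
qed

lemma score_t1:
  "(\<Sum>l\<in>Lab L. lmv (Lab L) (kt1 G A) (emb G w \<sigma> p) l * lmv (Lab L) qt1 (emb G w \<sigma> i) l)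
   = (\<Sum>B\<in>UNIV. \<Sum>k\<in>{1..L}. snd \<sigma> B i k * (\<Sum>C\<in>UNIV. prule G B A C * fst \<sigma> C p k))"
  by (auto simp: sum_Lab lmv_kt1 lmv_qt1 ssimps mult.commute intro!: sum.cong)

lemma score_t2: "1 \<le> i \<Longrightarrow> i \<le> L \<Longrightarrow>
  (\<Sum>l\<in>Lab L. lmv (Lab L) (kt2 C) (emb G w \<sigma> p) l * lmv (Lab L) (qt2 C) (emb G w \<sigma> i) l)
   = (if 2 \<le> i then fst \<sigma> C p (i - 1) else 0)"
proof -
  assume p: "1 \<le> i" "i \<le> L"
  have "(\<Sum>e=1..L. if Suc e \<le> L \<and> i = Suc e then fst \<sigma> C p e * 1 else 0) =
        (\<Sum>e=1..L. if e = i - 1 then (if 2 \<le> i then fst \<sigma> C p e else 0) else 0)"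
    using p by (intro sum.cong) auto
  then show ?thesis using p by (auto simp: sum_Lab lmv_kt2 lmv_qt2 ssimps)
qed

lemma score_r: "1 \<le> p \<Longrightarrow> p \<le> L \<Longrightarrow>
  (\<Sum>l\<in>Lab L. lmv (Lab L) kr (emb G w \<sigma> p) l * lmv (Lab L) kr (emb G w \<sigma> i) l)
   = (if p = i then 1 else 0)"
  by (auto simp: sum_Lab lmv_kr ssimps)

lemma score_b: "1 \<le> p \<Longrightarrow> p \<le> L \<Longrightarrow>
  (\<Sum>l\<in>Lab L. lmv (Lab L) kb (emb G w \<sigma> p) l * lmv (Lab L) qb (emb G w \<sigma> i) l)
   = (if i = 1 then 1 else 0)"
  by (auto simp: sum_Lab lmv_kb lmv_qb ssimps)

lemma relu_id: "0 \<le> x \<Longrightarrow> relu x = x" by (simp add: relu_def)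

definition nonneg :: "('nt \<Rightarrow> nat \<Rightarrow> nat \<Rightarrow> real) \<times> ('nt \<Rightarrow> nat \<Rightarrow> nat \<Rightarrow> real) \<Rightarrow> bool" where
  "nonneg \<sigma> \<longleftrightarrow> (\<forall>A i e. 0 \<le> fst \<sigma> A i e \<and> 0 \<le> snd \<sigma> A i e)"

lemma contrib_in:
  assumes "length w \<le> L" "nonneg \<sigma>"
  shows "(\<Sum>j\<in>{1..length w}. relu (\<Sum>l'\<in>Lab L. lmv (Lab L) (kin B) (emb G w \<sigma> j) l' * lmv (Lab L) (qin B) (emb G w \<sigma> i) l')
            * lmv (Lab L) (vin G B) (emb G w \<sigma> j) l)
   = (case l of Al A e \<Rightarrow> if 1 \<le> e \<and> e \<le> L then (\<Sum>p\<in>{1..length w}. (if 2 \<le> p then fst \<sigma> B i (p - 1) else 0) *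
         (\<Sum>C\<in>UNIV. prule G A B C * fst \<sigma> C p e)) else 0 | _ \<Rightarrow> 0)"
proof -
  have "(\<Sum>j\<in>{1..length w}. relu (\<Sum>l'\<in>Lab L. lmv (Lab L) (kin B) (emb G w \<sigma> j) l' * lmv (Lab L) (qin B) (emb G w \<sigma> i) l')
            * lmv (Lab L) (vin G B) (emb G w \<sigma> j) l) =
     (\<Sum>j\<in>{1..length w}. (if 2 \<le> j then fst \<sigma> B i (j - 1) else 0) * lmv (Lab L) (vin G B) (emb G w \<sigma> j) l)"
    using assms by (intro sum.cong refl) (simp add: score_in relu_id nonneg_def)
  then show ?thesis by (cases l) (simp_all add: lmv_vin sum_distrib_right[symmetric] ssimps)
qed

lemma contrib_t1:
  assumes "length w \<le> L" "nonneg \<sigma>" "is_pcfg G"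
  shows "(\<Sum>j\<in>{1..length w}. relu (\<Sum>l'\<in>Lab L. lmv (Lab L) (kt1 G A) (emb G w \<sigma> j) l' * lmv (Lab L) qt1 (emb G w \<sigma> i) l')
            * lmv (Lab L) (vt1 A) (emb G w \<sigma> j) l)
   = (case l of Be A' e \<Rightarrow> if A' = A then (\<Sum>p\<in>{1..length w}.
          (\<Sum>B\<in>UNIV. \<Sum>k\<in>{1..L}. snd \<sigma> B i k * (\<Sum>C\<in>UNIV. prule G B A C * fst \<sigma> C p k)) * (if p = e + 1 then 1 else 0)) else 0
        | _ \<Rightarrow> 0)"
proof -
  have nn: "0 \<le> (\<Sum>B\<in>UNIV. \<Sum>k\<in>{1..L}. snd \<sigma> B i k * (\<Sum>C\<in>UNIV. prule G B A C * fst \<sigma> C p k))" for p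
    using assms(2,3) unfolding nonneg_def
    by (intro sum_nonneg mult_nonneg_nonneg) (auto simp: pcfg_nonneg)
  have "(\<Sum>j\<in>{1..length w}. relu (\<Sum>l'\<in>Lab L. lmv (Lab L) (kt1 G A) (emb G w \<sigma> j) l' * lmv (Lab L) qt1 (emb G w \<sigma> i) l')
            * lmv (Lab L) (vt1 A) (emb G w \<sigma> j) l) =
     (\<Sum>j\<in>{1..length w}. (\<Sum>B\<in>UNIV. \<Sum>k\<in>{1..L}. snd \<sigma> B i k * (\<Sum>C\<in>UNIV. prule G B A C * fst \<sigma> C j k)) * lmv (Lab L) (vt1 A) (emb G w \<sigma> j) l)"
    using nn by (intro sum.cong refl) (simp add: score_t1 relu_id)
  also have "\<dots> = (case l of Be A' e \<Rightarrow> if A' = A then (\<Sum>p\<in>{1..length w}.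
          (\<Sum>B\<in>UNIV. \<Sum>k\<in>{1..L}. snd \<sigma> B i k * (\<Sum>C\<in>UNIV. prule G B A C * fst \<sigma> C p k)) * (if p = e + 1 then 1 else 0)) else 0
        | _ \<Rightarrow> 0)"
  proof (cases l)
    case (Be A' e)
    show ?thesis unfolding Be using assms(1)
      by (auto simp: lmv_vt1 intro!: sum.cong)
  qed (simp_all add: lmv_vt1)
  finally show ?thesis .
qed

lemma contrib_t2:
  assumes "length w \<le> L" "nonneg \<sigma>" "1 \<le> i" "i \<le> L"
  shows "(\<Sum>j\<in>{1..length w}. relu (\<Sum>l'\<in>Lab L. lmv (Lab L) (kt2 C) (emb G w \<sigma> j) l' * lmv (Lab L) (qt2 C) (emb G w \<sigma> i) l')
            * lmv (Lab L) (vt2 G C) (emb G w \<sigma> j) l)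
   = (case l of Be A e \<Rightarrow> if 1 \<le> e \<and> e \<le> L then (\<Sum>p\<in>{1..length w}. (if 2 \<le> i then fst \<sigma> C p (i - 1) else 0) *
         (\<Sum>B\<in>UNIV. prule G B C A * snd \<sigma> B p e)) else 0 | _ \<Rightarrow> 0)"
proof -
  have "(\<Sum>j\<in>{1..length w}. relu (\<Sum>l'\<in>Lab L. lmv (Lab L) (kt2 C) (emb G w \<sigma> j) l' * lmv (Lab L) (qt2 C) (emb G w \<sigma> i) l')
            * lmv (Lab L) (vt2 G C) (emb G w \<sigma> j) l) =
     (\<Sum>j\<in>{1..length w}. (if 2 \<le> i then fst \<sigma> C j (i - 1) else 0) * lmv (Lab L) (vt2 G C) (emb G w \<sigma> j) l)"
    using assms by (intro sum.cong refl) (simp add: score_t2 relu_id nonneg_def)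
  then show ?thesis by (cases l) (simp_all add: lmv_vt2 sum_distrib_right[symmetric] ssimps)
qed

lemma contrib_r:
  assumes "length w \<le> L" "1 \<le> i" "i \<le> length w"
  shows "(\<Sum>j\<in>{1..length w}. relu (\<Sum>l'\<in>Lab L. lmv (Lab L) kr (emb G w \<sigma> j) l' * lmv (Lab L) kr (emb G w \<sigma> i) l')
            * lmv (Lab L) vr (emb G w \<sigma> j) l) = lmv (Lab L) vr (emb G w \<sigma> i) l"
proof -
  have "(\<Sum>j\<in>{1..length w}. relu (\<Sum>l'\<in>Lab L. lmv (Lab L) kr (emb G w \<sigma> j) l' * lmv (Lab L) kr (emb G w \<sigma> i) l')
            * lmv (Lab L) vr (emb G w \<sigma> j) l) =
     (\<Sum>j\<in>{1..length w}. if j = i then lmv (Lab L) vr (emb G w \<sigma> j) l else 0)"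
    using assms by (intro sum.cong refl) (simp add: score_r relu_def)
  then show ?thesis using assms by (simp add: ssimps)
qed

lemma contrib_b:
  assumes "length w \<le> L" "l \<in> Lab L"
  shows "(\<Sum>j\<in>{1..length w}. relu (\<Sum>l'\<in>Lab L. lmv (Lab L) kb (emb G w \<sigma> j) l' * lmv (Lab L) qb (emb G w \<sigma> i) l')
            * lmv (Lab L) (vb S) (emb G w \<sigma> j) l) =
     (case l of Be A e \<Rightarrow> if 1 \<le> e \<and> e \<le> L then (if i = 1 \<and> e = length w \<and> A = S then 1 else 0) else 0 | _ \<Rightarrow> 0)"
proof -
  have "(\<Sum>j\<in>{1..length w}. relu (\<Sum>l'\<in>Lab L. lmv (Lab L) kb (emb G w \<sigma> j) l' * lmv (Lab L) qb (emb G w \<sigma> i) l')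
            * lmv (Lab L) (vb S) (emb G w \<sigma> j) l) =
     (\<Sum>j\<in>{1..length w}. (if i = 1 then 1 else 0) * lmv (Lab L) (vb S) (emb G w \<sigma> j) l)"
    using assms by (intro sum.cong refl) (simp add: score_b relu_def)
  also have "\<dots> = (case l of Be A e \<Rightarrow> if 1 \<le> e \<and> e \<le> L then (if i = 1 \<and> e = length w \<and> A = S then 1 else 0) else 0 | _ \<Rightarrow> 0)"
  proof (cases l)
    case (Be A e)
    show ?thesis using assms unfolding Be
      by (auto simp: lmv_vb sum_subtractf ssimps)
  qed (simp_all add: lmv_vb)
  finally show ?thesis .
qed

definition zh :: "('nt lab \<Rightarrow> 'nt lab \<Rightarrow> real) \<times> ('nt lab \<Rightarrow> 'nt lab \<Rightarrow> real) \<times> ('nt lab \<Rightarrow> 'nt lab \<Rightarrow> real)" where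
  "zh = (\<lambda>_ _. 0, \<lambda>_ _. 0, \<lambda>_ _. 0)"

definition heads :: "('nt::finite) pcfg \<Rightarrow> 'nt list \<Rightarrow> (('nt lab \<Rightarrow> 'nt lab \<Rightarrow> real) \<times> ('nt lab \<Rightarrow> 'nt lab \<Rightarrow> real) \<times> ('nt lab \<Rightarrow> 'nt lab \<Rightarrow> real)) list" where
  "heads G xs = map (\<lambda>B. (kin B, qin B, vin G B)) xs @ map (\<lambda>A. (kt1 G A, qt1, vt1 A)) xs
     @ map (\<lambda>C. (kt2 C, qt2 C, vt2 G C)) xs @ [(kr, kr, vr), (kb, qb, vb (start G))] @ replicate (length xs - 2) zh"

lemma length_heads: "2 \<le> length xs \<Longrightarrow> length (heads G xs) = 4 * length xs"
  by (simp add: heads_def)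

lemma LS_step:
  assumes G: "is_pcfg G" and xs: "distinct xs" "set xs = UNIV" and wL: "length w \<le> L"
    and i: "1 \<le> i" "i \<le> length w" and nn: "nonneg \<sigma>" and l: "l \<in> Lab L"
  shows "LS (Lab L) (length w) (heads G xs) (emb G w \<sigma>) i l =
     emb G w (phiA G w (fst \<sigma>), phiB G L w (fst \<sigma>) (snd \<sigma>)) i l"
proof -
  have iL: "i \<le> L" using i wL by simp
  note c1 = contrib_in[OF wL nn] and c2 = contrib_t1[OF wL nn G] and c3 = contrib_t2[OF wL nn i(1) iL]
    and c4 = contrib_r[OF wL i] and c5 = contrib_b[OF wL l]
  have "LS (Lab L) (length w) (heads G xs) (emb G w \<sigma>) i l = emb G w \<sigma> i l
     + (\<Sum>B\<in>UNIV. case l of Al A e \<Rightarrow> if 1 \<le> e \<and> e \<le> L then (\<Sum>p\<in>{1..length w}. (if 2 \<le> p then fst \<sigma> B i (p - 1) else 0) *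
         (\<Sum>C\<in>UNIV. prule G A B C * fst \<sigma> C p e)) else 0 | _ \<Rightarrow> 0)
     + (\<Sum>A\<in>UNIV. case l of Be A' e \<Rightarrow> if A' = A then (\<Sum>p\<in>{1..length w}.
          (\<Sum>B\<in>UNIV. \<Sum>k\<in>{1..L}. snd \<sigma> B i k * (\<Sum>C\<in>UNIV. prule G B A C * fst \<sigma> C p k)) * (if p = e + 1 then 1 else 0)) else 0
        | _ \<Rightarrow> 0)
     + ((\<Sum>C\<in>UNIV. case l of Be A e \<Rightarrow> if 1 \<le> e \<and> e \<le> L then (\<Sum>p\<in>{1..length w}. (if 2 \<le> i then fst \<sigma> C p (i - 1) else 0) *
         (\<Sum>B\<in>UNIV. prule G B C A * snd \<sigma> B p e)) else 0 | _ \<Rightarrow> 0)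
     + (lmv (Lab L) vr (emb G w \<sigma> i) l
     + ((case l of Be A e \<Rightarrow> if 1 \<le> e \<and> e \<le> L then (if i = 1 \<and> e = length w \<and> A = start G then 1 else 0) else 0 | _ \<Rightarrow> 0)
     + 0)))"
    unfolding LS_def heads_def map_append sum_list_append map_map comp_def fst_conv snd_conv
      sum_list_distinct_conv_sum_set[OF xs(1)] xs(2) c1 c2 c3 c4 c5 list.map sum_list.Cons
    by (simp add: zh_def lmv_zero sum_list_replicate)
  also have "\<dots> = emb G w (phiA G w (fst \<sigma>), phiB G L w (fst \<sigma>) (snd \<sigma>)) i l"
  proof (cases l)
    case (Al A e)
    then show ?thesis using l by (simp add: emb_def lmv_vr phiA_def)
  next
    case (Be A e)
    then show ?thesis using l by (simp add: emb_def lmv_vr phiB_def ssimps)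
  qed (simp_all add: emb_def lmv_vr)
  finally show ?thesis .
qed


lemma layer_step_cong:
  assumes "\<forall>j\<in>{1..m}. E j = E' j" "i \<in> {1..m}"
  shows "layer_step d m hs E i = layer_step d m hs E' i"
proof -
  have Ei: "E i = E' i" using assms by auto
  have "map (\<lambda>h. \<Sum>j\<in>{1..m}. relu (dotp d (mvec d (Kmat h) (E j)) (mvec d (Qmat h) (E' i))) * mvec d (Vmat h) (E j) r) hs
      = map (\<lambda>h. \<Sum>j\<in>{1..m}. relu (dotp d (mvec d (Kmat h) (E' j)) (mvec d (Qmat h) (E' i))) * mvec d (Vmat h) (E' j) r) hs" for r
    using assms(1) by (intro map_cong sum.cong refl) auto
  then show ?thesis unfolding layer_step_def Ei by (intro ext) (simp only:)
qed

lemma lift_cong: "(\<And>l. l \<in> \<Lambda> \<Longrightarrow> f l = g l) \<Longrightarrow> lift \<iota> \<Lambda> f = lift \<iota> \<Lambda> g"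
  unfolding lift_def by (intro ext) (auto, metis imageI inv_into_into)

lemma foldl_replicate_Suc: "foldl g a (replicate (Suc n) x) = g (foldl g a (replicate n x)) x"
  by (induction n arbitrary: a) auto

definition initemb :: "('nt::finite) pcfg \<Rightarrow> nat \<Rightarrow> nat \<Rightarrow> 'nt lab \<Rightarrow> real" where
  "initemb G word pos l = (case l of Pos p \<Rightarrow> if p = pos then 1 else 0
     | Al A e \<Rightarrow> if e = pos then lrule G A word else 0 | Be _ _ \<Rightarrow> 0
     | Ba A e \<Rightarrow> if e = pos then lrule G A word else 0)"

lemma initemb_emb: "initemb G (w ! (i - 1)) i = emb G w (iter G L w 0) i"
  by (intro ext, case_tac x) (auto simp: initemb_def emb_def baseA_def)

lemma nonneg_iter: "is_pcfg G \<Longrightarrow> nonneg (iter G L w t)"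
  using iter_nonneg unfolding nonneg_def by blast

lemma run_layers:
  assumes G: "is_pcfg G" and xs: "distinct xs" "set xs = UNIV" and wL: "length w \<le> L"
    and inj: "inj_on \<iota> (Lab L)" and sub: "\<iota> ` Lab L \<subseteq> {..<d}"
  shows "\<forall>i\<in>{1..length w}. foldl (\<lambda>e hs. layer_step d (length w) hs e)
           (\<lambda>i. lift \<iota> (Lab L) (initemb G (w ! (i - 1)) i))
           (replicate t (map (mkhead \<iota> (Lab L)) (heads G xs))) i
         = lift \<iota> (Lab L) (emb G w (iter G L w t) i)"
proof (induction t)
  case 0
  show ?case
  proof
    fix i
    have "initemb G (w ! (i - 1)) i = emb G w (iter G L w 0) i" by (rule initemb_emb)
    then show "foldl (\<lambda>e hs. layer_step d (length w) hs e)
           (\<lambda>i. lift \<iota> (Lab L) (initemb G (w ! (i - 1)) i))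
           (replicate 0 (map (mkhead \<iota> (Lab L)) (heads G xs))) i
         = lift \<iota> (Lab L) (emb G w (iter G L w 0) i)" by simp
  qed
next
  case (Suc t)
  show ?case
  proof
    fix i assume i: "i \<in> {1..length w}"
    have "foldl (\<lambda>e hs. layer_step d (length w) hs e)
           (\<lambda>i. lift \<iota> (Lab L) (initemb G (w ! (i - 1)) i))
           (replicate (Suc t) (map (mkhead \<iota> (Lab L)) (heads G xs))) i
        = layer_step d (length w) (map (mkhead \<iota> (Lab L)) (heads G xs)) (\<lambda>i. lift \<iota> (Lab L) (emb G w (iter G L w t) i)) i"
      unfolding foldl_replicate_Suc by (rule layer_step_cong[OF Suc.IH i])
    also have "\<dots> = lift \<iota> (Lab L) (LS (Lab L) (length w) (heads G xs) (emb G w (iter G L w t)) i)"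
      by (rule layer_step_lift[OF inj sub finite_Lab])
    also have "\<dots> = lift \<iota> (Lab L) (emb G w (iter G L w (Suc t)) i)"
      using i by (intro lift_cong) (simp add: LS_step[OF G xs wL _ _ nonneg_iter[OF G]])
    finally show "foldl (\<lambda>e hs. layer_step d (length w) hs e)
           (\<lambda>i. lift \<iota> (Lab L) (initemb G (w ! (i - 1)) i))
           (replicate (Suc t) (map (mkhead \<iota> (Lab L)) (heads G xs))) i
         = lift \<iota> (Lab L) (emb G w (iter G L w (Suc t)) i)" .
  qed
qed

lemma card_Lab: "card (Lab L :: ('nt::finite) lab set) \<le> (3 * card (UNIV :: 'nt set) + 1) * L"
proof -
  have "card (Lab L :: 'nt lab set) \<le> card (Pos ` {1..L} :: 'nt lab set) + card ((\<lambda>(A, e). Al A e) ` (UNIV \<times> {1..L}) :: 'nt lab set)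
     + card ((\<lambda>(A, e). Be A e) ` (UNIV \<times> {1..L}) :: 'nt lab set) + card ((\<lambda>(A, e). Ba A e) ` (UNIV \<times> {1..L}) :: 'nt lab set)"
    unfolding Lab_def by (rule order_trans[OF card_Un_le] add_mono order_trans[OF card_Un_le] order_refl)+
  also have "\<dots> \<le> L + card (UNIV \<times> {1..L} :: ('nt \<times> nat) set) + card (UNIV \<times> {1..L} :: ('nt \<times> nat) set) + card (UNIV \<times> {1..L} :: ('nt \<times> nat) set)"
    by (intro add_mono card_image_le order_trans[OF card_image_le]) auto
  also have "\<dots> = (3 * card (UNIV :: 'nt set) + 1) * L" by (simp add: card_cartesian_product algebra_simps)
  finally show ?thesis .
qed


definition zhead :: head where "zhead = \<lparr>Kmat = \<lambda>_ _. 0, Qmat = \<lambda>_ _. 0, Vmat = \<lambda>_ _. 0\<rparr>"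

lemma layer_step_zero: "set hs \<subseteq> {zhead} \<Longrightarrow> layer_step d m hs e = e"
proof -
  assume "set hs \<subseteq> {zhead}"
  then have mz: "map (\<lambda>h. \<Sum>j\<in>{1..m}. relu (dotp d (mvec d (Kmat h) (e j)) (mvec d (Qmat h) (e i))) * mvec d (Vmat h) (e j) r) hs
     = map (\<lambda>h. 0) hs" for i r
    by (intro map_cong refl) (auto simp: zhead_def mvec_def)
  then show ?thesis unfolding layer_step_def by (intro ext) (simp only: mz, simp)
qed

lemma foldl_zero: "set hs \<subseteq> {zhead} \<Longrightarrow> foldl (\<lambda>e hs. layer_step d m hs e) e0 (replicate n hs) = e0"
  by (induction n) (simp_all add: foldl_replicate_Suc layer_step_zero)

lemma ins_len_zero_interm:
  assumes "is_pcfg G" "\<forall>A::'nt::finite. A \<in> interm G"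
  shows "ins_len G w n A i = 0"
proof (induction n arbitrary: A i rule: less_induct)
  case (less n)
  show ?case
  proof (cases n)
    case 0
    then show ?thesis using assms unfolding is_pcfg_def by simp
  next
    case (Suc d)
    then show ?thesis using less by simp
  qed
qed

lemma card1_generated:
  assumes G: "is_pcfg G" and c: "card (UNIV :: ('nt::finite) set) = 1" and gen: "generated (G :: 'nt pcfg) w"
  shows "length w = 1" "\<And>A::'nt. A = start G"
proof -
  obtain x :: 'nt where U: "UNIV = {x}" using c by (rule card_1_singletonE)
  show all: "\<And>A::'nt. A = start G" using U by (metis UNIV_I singletonD)
  have pos: "inside G w (start G) 1 (length w) > 0" and ne: "w \<noteq> []" using gen unfolding generated_def by auto
  have ni: "start G \<notin> interm G"
  proof
    assume "start G \<in> interm G"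
    then have "\<forall>A::'nt. A \<in> interm G" using all by metis
    then have z: "ins_len G w n A i = 0" for n A i using ins_len_zero_interm[OF G] by blast
    show False using pos by (simp add: inside_def z split: if_splits)
  qed
  then have pz: "prule G A B C = 0" for A B C using G all unfolding is_pcfg_def by metis
  show "length w = 1"
  proof (rule ccontr)
    assume "length w \<noteq> 1"
    then have "2 \<le> length w" using ne by (cases w) (auto simp: Suc_le_eq)
    then obtain d where "length w - 1 = Suc d" by (intro that[of "length w - 2"]) simp
    then have "inside G w (start G) 1 (length w) = 0" by (simp add: inside_def pz)
    then show False using pos by simp
  qed
qed

theorem mainTheorem1:
  fixes G :: "('nt::finite) pcfg" and L :: nat
  assumes "is_pcfg G" and "L \<ge> 1"
  shows "\<exists>T :: transformer.
     tdim T = (4 * card (UNIV :: 'nt set) + 1) * L \<and>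
     length (tlayers T) = 2 * L - 1 \<and>
     (\<forall>hs \<in> set (tlayers T). length hs = 4 * card (UNIV :: 'nt set)) \<and>
     (\<exists>(pa :: 'nt \<Rightarrow> nat \<Rightarrow> nat \<Rightarrow> nat) (ca :: 'nt \<Rightarrow> nat \<Rightarrow> nat \<Rightarrow> nat)
        (pb :: 'nt \<Rightarrow> nat \<Rightarrow> nat \<Rightarrow> nat) (cb :: 'nt \<Rightarrow> nat \<Rightarrow> nat \<Rightarrow> nat).
       \<forall>w. generated G w \<and> length w \<le> L \<longrightarrow>
         (\<forall>A i j. 1 \<le> i \<and> i \<le> j \<and> j \<le> length w \<longrightarrow>
            1 \<le> pa A i j \<and> pa A i j \<le> length w \<and> ca A i j < tdim T \<and>
            final_emb T w (pa A i j) (ca A i j) = inside G w A i j \<and>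
            1 \<le> pb A i j \<and> pb A i j \<le> length w \<and> cb A i j < tdim T \<and>
            final_emb T w (pb A i j) (cb A i j) = outside G w A i j))"
proof -
  note G = assms(1) and L1 = assms(2)
  let ?N = "card (UNIV :: 'nt set)"
  define d where "d = (4 * ?N + 1) * L"
  have N1: "1 \<le> ?N" by (simp add: Suc_le_eq card_gt_0_iff)
  show ?thesis
  proof (cases "?N = 1")
    case True
    define T where "T = \<lparr>tdim = d, temb = (\<lambda>word pos c. if c = 0 then lrule G (start G) word else if c = 1 then 1 else 0),
       tlayers = replicate (2 * L - 1) (replicate 4 zhead)\<rparr>"
    have fe: "final_emb T w = (\<lambda>i c. if c = 0 then lrule G (start G) (w ! (i - 1)) else if c = 1 then 1 else 0)" for w
      unfolding final_emb_def T_def by (simp add: foldl_zero cong: if_cong)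
    have d2: "1 < d" using L1 True by (simp add: d_def)
    show ?thesis
    proof (intro exI conjI allI impI)
      show "tdim T = (4 * ?N + 1) * L" by (simp add: T_def d_def)
      show "length (tlayers T) = 2 * L - 1" by (simp add: T_def)
      show "\<forall>hs\<in>set (tlayers T). length hs = 4 * ?N" using True by (simp add: T_def)
      fix w A i j
      assume w: "generated G w \<and> length w \<le> L" and ij: "1 \<le> i \<and> i \<le> j \<and> j \<le> length w"
      have m1: "length w = 1" and all: "\<And>A::'nt. A = start G" using card1_generated[OF G True] w by auto
      then have ij1: "i = 1" "j = 1" using ij by auto
      show "1 \<le> (1::nat)" "1 \<le> length w" "(0::nat) < tdim T" "(1::nat) < tdim T" "1 \<le> (1::nat)" "1 \<le> length w"
        using m1 d2 by (auto simp: T_def)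
      show "final_emb T w 1 0 = inside G w A i j"
        using ij1 m1 all[of A] by (simp add: fe inside_def)
      show "final_emb T w 1 1 = outside G w A i j"
        using ij1 m1 all[of A] by (simp add: fe outside.simps)
    qed
  next
    case False
    then have N2: "2 \<le> ?N" using N1 by simp
    obtain xs :: "'nt list" where xs: "distinct xs" "set xs = UNIV"
      using finite_distinct_list[OF finite_UNIV] by blast
    have lxs: "length xs = ?N" using distinct_card[OF xs(1)] xs(2) by simp
    have "card (Lab L :: 'nt lab set) \<le> card {..<d}"
      using card_Lab[where 'nt='nt, of L] by (simp add: d_def algebra_simps)
    then obtain \<iota> :: "'nt lab \<Rightarrow> nat" where io: "\<iota> ` Lab L \<subseteq> {..<d}" "inj_on \<iota> (Lab L)"
      using card_le_inj[OF finite_Lab finite_lessThan] by blast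
    define T where "T = \<lparr>tdim = d, temb = (\<lambda>word pos. lift \<iota> (Lab L) (initemb G word pos)),
       tlayers = replicate (2 * L - 1) (map (mkhead \<iota> (Lab L)) (heads G xs))\<rparr>"
    have key: "\<forall>w. generated G w \<and> length w \<le> L \<longrightarrow>
         (\<forall>A i j. 1 \<le> i \<and> i \<le> j \<and> j \<le> length w \<longrightarrow>
            1 \<le> i \<and> i \<le> length w \<and> \<iota> (Al A j) < tdim T \<and>
            final_emb T w i (\<iota> (Al A j)) = inside G w A i j \<and>
            1 \<le> i \<and> i \<le> length w \<and> \<iota> (Be A j) < tdim T \<and>
            final_emb T w i (\<iota> (Be A j)) = outside G w A i j)"
    proof (intro allI impI conjI)
      fix w and A :: 'nt and i j
      assume w: "generated G w \<and> length w \<le> L" and ij: "1 \<le> i \<and> i \<le> j \<and> j \<le> length w"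
      have wL: "length w \<le> L" using w by simp
      have fe: "final_emb T w i = lift \<iota> (Lab L) (emb G w (iter G L w (2 * L - 1)) i)"
        using run_layers[OF G xs wL io(2) io(1), of "2 * L - 1"] ij
        unfolding final_emb_def T_def by simp
      have alL: "Al A j \<in> Lab L" "Be A j \<in> Lab L" using ij wL by auto
      show "1 \<le> i" "i \<le> length w" "1 \<le> i" "i \<le> length w" using ij by auto
      show "\<iota> (Al A j) < tdim T" "\<iota> (Be A j) < tdim T" 
      proof -
        have "\<iota> (Al A j) \<in> {..<d}" "\<iota> (Be A j) \<in> {..<d}" using io(1) alL by blast+
        then show "\<iota> (Al A j) < tdim T" "\<iota> (Be A j) < tdim T" by (simp_all add: T_def)
      qed
      show "final_emb T w i (\<iota> (Al A j)) = inside G w A i j"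
      proof -
        have "fst (iter G L w (2 * L - 1)) A i j = inside G w A i j"
          by (rule iter_inside) (use ij wL in linarith)+
        then show ?thesis unfolding fe lift_at[OF io(2) alL(1)] by (simp add: emb_def)
      qed
      show "final_emb T w i (\<iota> (Be A j)) = outside G w A i j"
      proof -
        have "snd (iter G L w (2 * L - 1)) A i j = outside G w A i j"
          by (rule iter_outside) (use ij wL L1 in linarith)+
        then show ?thesis unfolding fe lift_at[OF io(2) alL(2)] by (simp add: emb_def)
      qed
    qed
    show ?thesis
      apply (rule exI[where x=T])
      apply (intro conjI)
        apply (simp add: T_def d_def)
       apply (simp add: T_def)
      using N2 lxs apply (simp add: T_def length_heads)
      apply (rule exI[where x="\<lambda>(A::'nt) (i::nat) (j::nat). i"], rule exI[where x="\<lambda>(A::'nt) (i::nat) (j::nat). \<iota> (Al A j)"],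
          rule exI[where x="\<lambda>(A::'nt) (i::nat) (j::nat). i"], rule exI[where x="\<lambda>(A::'nt) (i::nat) (j::nat). \<iota> (Be A j)"])
      using key by blast
  qed
qed


end
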